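(* The anticyclic action of $\mathfrak{S}_{n+1}$ on signed shrubs on $\{1,\dots,n\}$ preserves the number of equivalence classes of ramified vertices: if $\sigma\cdot(\varepsilon,P)=(\varepsilon',P')$ then $|\operatorname{Ram}(P)|=|\operatorname{Ram}(P')|$.
   Context: A shrub $P$ on a finite set $I$ is a set $E$ of edges (unordered pairs of distinct elements of $I$) with a height function $h_P:I\to\mathbb{N}$; $j$ covers $i$ if $\{i,j\}\in E$ and $h_P(j)=h_P(i)+1$. Axioms: (1) edges join vertices whose heights differ by $1$; (2) every vertex of positive height covers some vertex; (3) no four distinct $a,b,c,d$ with $a$ covering $b$ and $c$, $c$ covering $d$, $\{b,d\}\notin E$; (4) no five distinct $a,b,c,d,e$ with $a$ covering $c,d$, $b$ covering $d,e$, $\{a,e\}\notin E$, $\{b,c\}\notin E$. A vertex is ramified if it covers at least two distinct vertices; two ramified vertices are equivalent if they cover the same set of vertices; $\operatorname{Ram}(P)$ is the set of equivalence classes, and $r^-$ the common set of vertices covered by elements of $r\in\operatorname{Ram}(P)$. For $S\subseteq I$, $\langle S\rangle_P$ is the set of $j$ such that every descending path from $j$ to height $0$ meets $S$; with $u[S]=\sum_{k\in S}u_k$, $f_P=\prod_{i\in I}u[\langle\{i\}\rangle_P]^{-1}\prod_{r\in\operatorname{Ram}(P)}u[\langle r^-\rangle_{P\setminus\langle r\rangle_P}]/u[\langle r^-\rangle_P]$, where $P\setminus\langle r\rangle_P$ is the restriction of $P$ to $I\setminus\langle r\rangle_P$. $\mathfrak{S}_{n+1}$ acts on $\mathbb{Q}(u_1,\dots,u_n)$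 by setting $u_0=-(u_1+\dots+u_n)$, permuting $u_0,\dots,u_n$ and re-expressing in $u_1,\dots,u_n$. Signed shrubs are pairs $(\varepsilon,P)$ with $\varepsilon=\pm1$; the map $(\varepsilon,P)\mapsto\varepsilon f_P$ is injective and its image is stable under $\mathfrak{S}_{n+1}$, and the anticyclic action is defined by $\sigma\cdot(\varepsilon,P)=(\varepsilon',P')$ where $\varepsilon'f_{P'}=\sigma\cdot(\varepsilon f_P)$. *)

theory Defs
  imports Complex_Main "HOL-Combinatorics.Permutations"
begin

text \<open>A shrub on I = {1..n} is given by an edge set E (a set of 2-element subsets of I)
  and a height function h. Only the values of h on I matter.\<close>

definition covers :: "nat set set \<Rightarrow> (nat \<Rightarrow> nat) \<Rightarrow> nat \<Rightarrow> nat \<Rightarrow> bool" where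
  "covers E h j i \<longleftrightarrow> {i, j} \<in> E \<and> h j = h i + 1"

definition shrub :: "nat \<Rightarrow> nat set set \<Rightarrow> (nat \<Rightarrow> nat) \<Rightarrow> bool" where
  "shrub n E h \<longleftrightarrow>
     E \<subseteq> {{i, j} | i j. i \<in> {1..n} \<and> j \<in> {1..n} \<and> i \<noteq> j} \<and>
     (\<forall>i j. {i, j} \<in> E \<longrightarrow> h i = h j + 1 \<or> h j = h i + 1) \<and>
     (\<forall>i\<in>{1..n}. 0 < h i \<longrightarrow> (\<exists>k. covers E h i k)) \<and>
     \<not> (\<exists>a b c d. distinct [a, b, c, d] \<and> a \<in> {1..n} \<and> b \<in> {1..n} \<and> c \<in> {1..n} \<and> d \<in> {1..n}
          \<and> covers E h a b \<and> covers E h a c \<and> covers E h c d \<and> {b, d} \<notin> E) \<and>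
     \<not> (\<exists>a b c d e. distinct [a, b, c, d, e] \<and> a \<in> {1..n} \<and> b \<in> {1..n} \<and> c \<in> {1..n}
          \<and> d \<in> {1..n} \<and> e \<in> {1..n}
          \<and> covers E h a c \<and> covers E h a d \<and> covers E h b d \<and> covers E h b e
          \<and> {a, e} \<notin> E \<and> {b, c} \<notin> E)"

definition down :: "nat set set \<Rightarrow> (nat \<Rightarrow> nat) \<Rightarrow> nat \<Rightarrow> nat set" where
  "down E h j = {k. covers E h j k}"

definition ramified :: "nat \<Rightarrow> nat set set \<Rightarrow> (nat \<Rightarrow> nat) \<Rightarrow> nat \<Rightarrow> bool" where
  "ramified n E h j \<longleftrightarrow> j \<in> {1..n} \<and> 2 \<le> card (down E h j)"

definition Ram :: "nat \<Rightarrow> nat set set \<Rightarrow> (nat \<Rightarrow> nat) \<Rightarrow> nat set set" where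
  "Ram n E h = {{j. ramified n E h j \<and> down E h j = down E h i} | i. ramified n E h i}"

text \<open>r^-: the common set of vertices covered by the elements of the class r.\<close>
definition rminus :: "nat set set \<Rightarrow> (nat \<Rightarrow> nat) \<Rightarrow> nat set \<Rightarrow> nat set" where
  "rminus E h r = (\<Union>j\<in>r. down E h j)"

definition desc_path :: "nat set \<Rightarrow> nat set set \<Rightarrow> (nat \<Rightarrow> nat) \<Rightarrow> nat list \<Rightarrow> bool" where
  "desc_path J E h p \<longleftrightarrow> p \<noteq> [] \<and> set p \<subseteq> J \<and>
     (\<forall>i. Suc i < length p \<longrightarrow> covers E h (p ! i) (p ! Suc i)) \<and> h (last p) = 0"

text \<open>gen J E h S = <S> in the restriction of P to J.\<close>
definition gen :: "nat set \<Rightarrow> nat set set \<Rightarrow> (nat \<Rightarrow> nat) \<Rightarrow> nat set \<Rightarrow> nat set" where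
  "gen J E h S = {j \<in> J. \<forall>p. desc_path J E h p \<and> hd p = j \<longrightarrow> set p \<inter> S \<noteq> {}}"

definition uS :: "(nat \<Rightarrow> rat) \<Rightarrow> nat set \<Rightarrow> rat" where
  "uS u S = (\<Sum>k\<in>S. u k)"

text \<open>The rational function f_P, represented by its evaluation at a point u (coordinates u 1..u n).\<close>
definition fP :: "nat \<Rightarrow> nat set set \<Rightarrow> (nat \<Rightarrow> nat) \<Rightarrow> (nat \<Rightarrow> rat) \<Rightarrow> rat" where
  "fP n E h u =
     (\<Prod>i\<in>{1..n}. inverse (uS u (gen {1..n} E h {i}))) *
     (\<Prod>r\<in>Ram n E h.
        uS u (gen ({1..n} - gen {1..n} E h r) E h (rminus E h r))
        / uS u (gen {1..n} E h (rminus E h r)))"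

definition ext :: "nat \<Rightarrow> (nat \<Rightarrow> rat) \<Rightarrow> nat \<Rightarrow> rat" where
  "ext n u = u(0 := - (\<Sum>i=1..n. u i))"

text \<open>Every denominator
  occurring (before or after permuting u_0..u_n) is such a subsum, and this set is Zariski
  dense, so equality of rational functions is equality at all generic points.\<close>
definition generic :: "nat \<Rightarrow> (nat \<Rightarrow> rat) \<Rightarrow> bool" where
  "generic n u \<longleftrightarrow> (\<forall>S. S \<subseteq> {0..n} \<and> S \<noteq> {} \<and> S \<noteq> {0..n} \<longrightarrow> uS (ext n u) S \<noteq> 0)"

end

theory Submission
  imports Defs "HOL-Computational_Algebra.Polynomial_Factorial" "HOL-Computational_Algebra.Field_as_Ring"
begin


lemma gen_sub: "gen J E h S \<subseteq> J" by (auto simp: gen_def)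

lemma gen_self: "x \<in> J \<Longrightarrow> x \<in> S \<Longrightarrow> x \<in> gen J E h S"
  unfolding gen_def desc_path_def by (auto dest: hd_in_set)

lemma gen_closed:
  assumes "i \<in> J" "0 < h i" "down E h i \<subseteq> gen J E h X"
  shows "i \<in> gen J E h X"
  unfolding gen_def
proof (intro CollectI conjI allI impI)
  show "i \<in> J" by fact
  fix p assume P: "desc_path J E h p \<and> hd p = i"
  then obtain q where pq: "p = i # q" unfolding desc_path_def by (cases p) auto
  have qne: "q \<noteq> []"
  proof
    assume "q = []" then have "last p = i" using pq by simp
    then show False using P assms(2) unfolding desc_path_def by simp
  qed
  have "covers E h (p ! 0) (p ! Suc 0)" using P qne pq unfolding desc_path_def by auto
  then have "hd q \<in> down E h i" using pq qne by (cases q) (auto simp: down_def)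
  then have hq: "hd q \<in> gen J E h X" using assms(3) by auto
  have dq: "desc_path J E h q"
    unfolding desc_path_def
  proof (intro conjI allI impI)
    show "q \<noteq> []" by fact
    show "set q \<subseteq> J" using P pq unfolding desc_path_def by auto
    fix m assume "Suc m < length q"
    then have "Suc (Suc m) < length p" using pq by simp
    then have "covers E h (p ! Suc m) (p ! Suc (Suc m))" using P unfolding desc_path_def by blast
    then show "covers E h (q ! m) (q ! Suc m)" using pq by simp
  next
    show "h (last q) = 0" using P pq qne unfolding desc_path_def by auto
  qed
  then have "set q \<inter> X \<noteq> {}" using hq unfolding gen_def by auto
  then show "set p \<inter> X \<noteq> {}" using pq by auto
qed

lemma covers_h: "covers E h j k \<Longrightarrow> h j = h k + 1" by (simp add: covers_def)

lemma shrub_E: "shrub n E h \<Longrightarrow> E \<subseteq> {{i, j} | i j. i \<in> {1..n} \<and> j \<in> {1..n} \<and> i \<noteq> j}"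
  unfolding shrub_def by (elim conjE) assumption

lemma shrub_pos: "shrub n E h \<Longrightarrow> i \<in> {1..n} \<Longrightarrow> 0 < h i \<Longrightarrow> \<exists>k. covers E h i k"
  unfolding shrub_def by (elim conjE) blast

lemma edge_in:
  assumes "shrub n E h" "covers E h j k"
  shows "j \<in> {1..n} \<and> k \<in> {1..n}"
proof -
  have "{k, j} \<in> E" using assms(2) by (simp add: covers_def)
  then obtain a b where "{k,j} = {a,b}" "a \<in> {1..n}" "b \<in> {1..n}"
    using shrub_E[OF assms(1)] by blast
  then show ?thesis by (auto simp: doubleton_eq_iff)
qed

lemma path_exists:
  assumes "shrub n E h"
  shows "k \<in> {1..n} \<Longrightarrow> h k = m \<Longrightarrow> \<exists>p. desc_path {1..n} E h p \<and> hd p = k \<and> (\<forall>x\<in>set p. h x \<le> h k)"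
proof (induction m arbitrary: k)
  case 0
  then show ?case by (intro exI[of _ "[k]"]) (auto simp: desc_path_def)
next
  case (Suc m)
  then obtain k' where c: "covers E h k k'" using shrub_pos[OF assms] by force
  then have k': "k' \<in> {1..n}" "h k' = m" using edge_in[OF assms c] Suc.prems covers_h[OF c] by auto
  obtain p where p: "desc_path {1..n} E h p" "hd p = k'" "\<forall>x\<in>set p. h x \<le> h k'"
    using Suc.IH[OF k'] by blast
  have pne: "p \<noteq> []" using p(1) by (simp add: desc_path_def)
  have "desc_path {1..n} E h (k # p)"
    unfolding desc_path_def
  proof (intro conjI allI impI)
    show "set (k # p) \<subseteq> {1..n}" using p(1) Suc.prems unfolding desc_path_def by auto
    fix i assume "Suc i < length (k # p)"
    show "covers E h ((k # p) ! i) ((k # p) ! Suc i)"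
    proof (cases i)
      case 0 then show ?thesis using c p(2) pne by (cases p) auto
    next
      case (Suc j) then show ?thesis using p(1) \<open>Suc i < length (k # p)\<close> unfolding desc_path_def by auto
    qed
  next
    show "h (last (k # p)) = 0" using p(1) pne unfolding desc_path_def by auto
  qed simp
  moreover have "\<forall>x\<in>set (k#p). h x \<le> h k" using p(3) k' Suc.prems by auto
  ultimately show ?case by (intro exI[of _ "k#p"]) auto
qed

definition Aset :: "nat \<Rightarrow> nat set set \<Rightarrow> (nat \<Rightarrow> nat) \<Rightarrow> nat set \<Rightarrow> nat set" where
  "Aset n E h r = gen ({1..n} - gen {1..n} E h r) E h (rminus E h r)"
definition Gset :: "nat \<Rightarrow> nat set set \<Rightarrow> (nat \<Rightarrow> nat) \<Rightarrow> nat set \<Rightarrow> nat set" where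
  "Gset n E h r = gen {1..n} E h (rminus E h r)"

lemma ram_struct:
  assumes S: "shrub n E h" and r: "r \<in> Ram n E h"
  shows "\<exists>i. i \<in> {1..n} \<and> 0 < h i \<and> down E h i \<noteq> {} \<and> rminus E h r = down E h i
     \<and> i \<in> gen {1..n} E h r \<and> down E h i \<subseteq> Aset n E h r"
proof -
  obtain i where ri: "ramified n E h i" "r = {j. ramified n E h j \<and> down E h j = down E h i}"
    using r unfolding Ram_def by blast
  have iI: "i \<in> {1..n}" using ri(1) by (simp add: ramified_def)
  have dne: "down E h i \<noteq> {}" using ri(1) unfolding ramified_def by auto
  then obtain k0 where "k0 \<in> down E h i" by blast
  then have hi: "0 < h i" by (auto simp: down_def covers_def)
  have ir: "i \<in> r" using ri by simp
  have rm: "rminus E h r = down E h i" unfolding rminus_def using ri ir by auto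
  have ig: "i \<in> gen {1..n} E h r" using gen_self[OF iI ir] .
  have "down E h i \<subseteq> Aset n E h r"
  proof
    fix k assume k: "k \<in> down E h i"
    then have ck: "covers E h i k" by (simp add: down_def)
    have kI: "k \<in> {1..n}" using edge_in[OF S ck] by simp
    obtain p where p: "desc_path {1..n} E h p" "hd p = k" "\<forall>x\<in>set p. h x \<le> h k"
      using path_exists[OF S kI refl] by blast
    have "set p \<inter> r = {}"
    proof (rule ccontr)
      assume "set p \<inter> r \<noteq> {}"
      then obtain j where j: "j \<in> set p" "j \<in> r" by blast
      then have "k \<in> down E h j" using ri k by simp
      then have "h j = h k + 1" by (simp add: down_def covers_def)
      then show False using p(3) j by fastforce
    qed
    then have "k \<notin> gen {1..n} E h r" using p unfolding gen_def by blast
    then show "k \<in> Aset n E h r" unfolding Aset_def using kI k rm by (intro gen_self) auto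
  qed
  then show ?thesis using iI hi dne rm ig by blast
qed

lemma Aset_props:
  assumes S: "shrub n E h" and r: "r \<in> Ram n E h"
  shows "Aset n E h r \<subseteq> {1..n}" "Aset n E h r \<noteq> {}"
    "Gset n E h r \<subseteq> {1..n}" "Gset n E h r \<noteq> {}"
    "\<And>X. Aset n E h r \<noteq> gen {1..n} E h X"
proof -
  obtain i where i: "i \<in> {1..n}" "0 < h i" "down E h i \<noteq> {}" "rminus E h r = down E h i"
     "i \<in> gen {1..n} E h r" "down E h i \<subseteq> Aset n E h r"
    using ram_struct[OF S r] by blast
  show "Aset n E h r \<subseteq> {1..n}" unfolding Aset_def using gen_sub by blast
  show "Aset n E h r \<noteq> {}" using i by blast
  show "Gset n E h r \<subseteq> {1..n}" unfolding Gset_def using gen_sub by blast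
  obtain k where k: "k \<in> down E h i" using i(3) by blast
  then have "covers E h i k" by (simp add: down_def)
  then have "k \<in> {1..n}" using edge_in[OF S] by blast
  then have "k \<in> Gset n E h r" unfolding Gset_def using i(4) k by (intro gen_self) auto
  then show "Gset n E h r \<noteq> {}" by blast
  fix X show "Aset n E h r \<noteq> gen {1..n} E h X"
  proof
    assume eq: "Aset n E h r = gen {1..n} E h X"
    have "i \<in> gen {1..n} E h X" using gen_closed[of i "{1..n}" h E X] i eq by auto
    moreover have "i \<notin> Aset n E h r" unfolding Aset_def using gen_sub i(5) by blast
    ultimately show False using eq by simp
  qed
qed



definition lin :: "nat \<Rightarrow> (nat \<Rightarrow> rat) \<Rightarrow> (nat \<Rightarrow> rat) \<Rightarrow> nat set \<Rightarrow> rat poly" where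
  "lin n a b T = [: uS (ext n a) T, uS (ext n b) T :]"

definition prp :: "nat \<Rightarrow> nat set \<Rightarrow> bool" where
  "prp n T \<longleftrightarrow> T \<subseteq> {0..n} \<and> T \<noteq> {} \<and> T \<noteq> {0..n}"

definition good :: "nat \<Rightarrow> (nat \<Rightarrow> rat) \<Rightarrow> (nat \<Rightarrow> rat) \<Rightarrow> bool" where
  "good n a b \<longleftrightarrow> (\<forall>T. prp n T \<longrightarrow> uS (ext n b) T \<noteq> 0) \<and>
     (\<forall>T1 T2. prp n T1 \<and> prp n T2 \<and> T1 \<noteq> T2 \<and> T1 \<noteq> {0..n} - T2 \<longrightarrow>
        uS (ext n a) T1 * uS (ext n b) T2 - uS (ext n a) T2 * uS (ext n b) T1 \<noteq> 0)"

lemma ext_lin: "ext n (\<lambda>i. a i + t * b i) k = ext n a k + t * ext n b k"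
  unfolding ext_def by (simp add: sum.distrib sum_distrib_left)

lemma poly_lin: "poly (lin n a b T) t = uS (ext n (\<lambda>i. a i + t * b i)) T"
  unfolding lin_def uS_def by (simp add: ext_lin sum.distrib sum_distrib_left algebra_simps)

lemma lin_coprime:
  assumes G: "good n a b" and "prp n T1" "prp n T2" "T1 \<noteq> T2" "T1 \<noteq> {0..n} - T2"
  shows "coprime (lin n a b T1) (lin n a b T2)"
proof -
  define x1 where "x1 = uS (ext n a) T1"
  define x2 where "x2 = uS (ext n a) T2"
  define y1 where "y1 = uS (ext n b) T1"
  define y2 where "y2 = uS (ext n b) T2"
  have d: "x1 * y2 - x2 * y1 \<noteq> 0" using G assms unfolding good_def x1_def x2_def y1_def y2_def by blast
  have eq: "[:y2:] * lin n a b T1 - [:y1:] * lin n a b T2 = [:x1 * y2 - x2 * y1:]"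
    unfolding lin_def x1_def[symmetric] x2_def[symmetric] y1_def[symmetric] y2_def[symmetric]
    by (simp add: algebra_simps)
  have u: "is_unit [:x1 * y2 - x2 * y1:]" using d by (simp add: is_unit_const_poly_iff dvd_field_iff)
  show ?thesis
  proof (rule coprimeI)
    fix c assume "c dvd lin n a b T1" "c dvd lin n a b T2"
    then have "c dvd [:y2:] * lin n a b T1 - [:y1:] * lin n a b T2"
      by (intro dvd_diff dvd_mult)
    then show "is_unit c" using eq u by (metis dvd_unit_imp_unit)
  qed
qed

lemma lin_nz:
  assumes G: "good n a b" and "prp n T"
  shows "lin n a b T \<noteq> 0" "degree (lin n a b T) = 1"
  using assms unfolding good_def lin_def by auto

lemma finite_bad:
  assumes G: "good n a b"
  shows "finite {t. \<not> generic n (\<lambda>i. a i + t * b i)}"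
proof -
  have "{t. \<not> generic n (\<lambda>i. a i + t * b i)} \<subseteq>
        (\<Union>T\<in>{T. prp n T}. {- uS (ext n a) T / uS (ext n b) T})"
  proof
    fix t assume "t \<in> {t. \<not> generic n (\<lambda>i. a i + t * b i)}"
    then obtain T where T: "prp n T" "uS (ext n (\<lambda>i. a i + t * b i)) T = 0"
      unfolding generic_def prp_def by blast
    then have "uS (ext n a) T + t * uS (ext n b) T = 0" "uS (ext n b) T \<noteq> 0"
      using poly_lin[of n a b T t] G unfolding lin_def good_def by auto
    then have "t = - uS (ext n a) T / uS (ext n b) T" by (simp add: field_simps)
    then show "t \<in> (\<Union>T\<in>{T. prp n T}. {- uS (ext n a) T / uS (ext n b) T})" using T by blast
  qed
  moreover have "finite {T. prp n T}"
    by (rule finite_subset[of _ "Pow {0..n}"]) (auto simp: prp_def)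
  ultimately show ?thesis by (meson finite_UN_I finite_insert finite.emptyI finite_subset)
qed

lemma img_prp:
  assumes T: "\<tau> permutes {0..n}" and "S \<subseteq> {1..n}" "S \<noteq> {}"
  shows "prp n (\<tau> ` S)"
proof -
  have "\<tau> ` S \<subseteq> \<tau> ` {0..n}" by (rule image_mono) (use assms(2) in auto)
  then have sub: "\<tau> ` S \<subseteq> {0..n}" using permutes_image[OF T] by simp
  have "card (\<tau> ` S) = card S" using permutes_inj_on[OF T] by (rule card_image)
  also have "\<dots> \<le> n" using card_mono[OF _ assms(2)] by simp
  finally have "\<tau> ` S \<noteq> {0..n}" by auto
  then show ?thesis using sub assms(3) unfolding prp_def by auto
qed

lemma sets_coprime:
  assumes G: "good n a b" and T: "\<tau> permutes {0..n}"
    and "S1 \<subseteq> {1..n}" "S1 \<noteq> {}" "S2 \<subseteq> {1..n}" "S2 \<noteq> {}" "S1 \<noteq> S2"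
  shows "coprime (lin n a b (\<tau> ` S1)) (lin n a b (\<tau> ` S2))"
proof (rule lin_coprime[OF G])
  show "prp n (\<tau> ` S1)" "prp n (\<tau> ` S2)" using img_prp[OF T] assms by auto
  show "\<tau> ` S1 \<noteq> \<tau> ` S2" using assms(7) permutes_inj[OF T] by (simp add: inj_image_eq_iff)
  show "\<tau> ` S1 \<noteq> {0..n} - \<tau> ` S2"
  proof
    assume eq: "\<tau> ` S1 = {0..n} - \<tau> ` S2"
    have "\<tau> 0 \<in> {0..n}" using permutes_image[OF T] by auto
    moreover have "\<tau> 0 \<notin> \<tau> ` S1" "\<tau> 0 \<notin> \<tau> ` S2"
      using assms(3,5) permutes_inj[OF T] by (auto simp: inj_image_mem_iff)
    ultimately show False using eq by blast
  qed
qed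

lemma uS_reindex:
  assumes T: "\<tau> permutes {0..n}"
  shows "uS (\<lambda>i. w (\<tau> i)) S = uS w (\<tau> ` S)"
  unfolding uS_def using sum.reindex[OF permutes_inj_on[OF T], of w S] by (simp add: o_def)



lemma finite_Ram: "finite (Ram n E h)"
  by (rule finite_subset[of _ "Pow {1..n}"]) (auto simp: Ram_def ramified_def)

lemma key:
  assumes S: "shrub n E h" and T: "\<tau> permutes {0..n}" and G: "good n a b"
  shows "\<exists>N D. N \<noteq> 0 \<and> degree N = card (Ram n E h) \<and> coprime N D \<and>
    (\<forall>t. generic n (\<lambda>i. a i + t * b i) \<longrightarrow> poly D t \<noteq> 0 \<and>
        fP n E h (\<lambda>i. ext n (\<lambda>i. a i + t * b i) (\<tau> i)) = poly N t / poly D t)"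
proof -
  let ?L = "\<lambda>S. lin n a b (\<tau> ` S)"
  define N where "N = (\<Prod>r\<in>Ram n E h. ?L (Aset n E h r))"
  define D1 where "D1 = (\<Prod>i\<in>{1..n}. ?L (gen {1..n} E h {i}))"
  define D2 where "D2 = (\<Prod>r\<in>Ram n E h. ?L (Gset n E h r))"
  have genI: "gen {1..n} E h {i} \<subseteq> {1..n}" "gen {1..n} E h {i} \<noteq> {}" if "i \<in> {1..n}" for i
    using gen_sub gen_self[OF that, of "{i}" E h] by auto
  have pA: "prp n (\<tau> ` Aset n E h r)" if "r \<in> Ram n E h" for r
    using img_prp[OF T] Aset_props[OF S that] by auto
  have pG: "prp n (\<tau> ` Gset n E h r)" if "r \<in> Ram n E h" for r
    using img_prp[OF T] Aset_props[OF S that] by auto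
  have pI: "prp n (\<tau> ` gen {1..n} E h {i})" if "i \<in> {1..n}" for i
    using img_prp[OF T] genI[OF that] by auto
  have N0: "N \<noteq> 0" unfolding N_def using lin_nz(1)[OF G pA] finite_Ram by auto
  have degN: "degree N = card (Ram n E h)"
    unfolding N_def using lin_nz[OF G pA] by (simp add: degree_prod_eq_sum_degree)
  have cop: "coprime N (D1 * D2)"
    unfolding N_def
  proof (rule prod_coprime_left)
    fix r assume r: "r \<in> Ram n E h"
    have "coprime (?L (Aset n E h r)) D1" unfolding D1_def
    proof (rule prod_coprime_right)
      fix i assume "i \<in> {1..n}"
      then show "coprime (?L (Aset n E h r)) (?L (gen {1..n} E h {i}))"
        using sets_coprime[OF G T] Aset_props[OF S r] genI by metis
    qed
    moreover have "coprime (?L (Aset n E h r)) D2" unfolding D2_def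
    proof (rule prod_coprime_right)
      fix r' assume r': "r' \<in> Ram n E h"
      show "coprime (?L (Aset n E h r)) (?L (Gset n E h r'))"
        using sets_coprime[OF G T] Aset_props[OF S r] Aset_props[OF S r'] unfolding Gset_def
        by metis
    qed
    ultimately show "coprime (?L (Aset n E h r)) (D1 * D2)" by simp
  qed
  have main: "poly (D1 * D2) t \<noteq> 0 \<and>
        fP n E h (\<lambda>i. ext n (\<lambda>i. a i + t * b i) (\<tau> i)) = poly N t / poly (D1 * D2) t"
    if gt: "generic n (\<lambda>i. a i + t * b i)" for t
  proof -
    have nz: "poly (lin n a b T) t \<noteq> 0" if "prp n T" for T
      using gt that unfolding poly_lin generic_def prp_def by blast
    have pD: "poly (D1 * D2) t \<noteq> 0"
      unfolding D1_def D2_def poly_mult poly_prod using nz pI pG finite_Ram by auto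
    have uSeq: "uS (\<lambda>i. ext n (\<lambda>i. a i + t * b i) (\<tau> i)) X = poly (?L X) t" for X
      using uS_reindex[OF T] poly_lin by simp
    have "fP n E h (\<lambda>i. ext n (\<lambda>i. a i + t * b i) (\<tau> i)) =
       (\<Prod>i\<in>{1..n}. inverse (poly (?L (gen {1..n} E h {i})) t)) *
       (\<Prod>r\<in>Ram n E h. poly (?L (Aset n E h r)) t / poly (?L (Gset n E h r)) t)"
      unfolding fP_def uSeq Aset_def Gset_def ..
    also have "\<dots> = inverse (poly D1 t) * (poly N t / poly D2 t)"
      unfolding D1_def D2_def N_def poly_prod prod_dividef
      using prod_inversef[of "\<lambda>i. poly (?L (gen {1..n} E h {i})) t" "{1..n}"] by (simp add: o_def)
    also have "\<dots> = poly N t / poly (D1 * D2) t" by (simp add: field_simps)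
    finally show ?thesis using pD by simp
  qed
  show ?thesis using N0 degN cop main by blast
qed

lemma fP_cong:
  assumes "\<forall>k\<in>{1..n}. v k = w k"
  shows "fP n E h v = fP n E h w"
proof -
  have e: "uS v X = uS w X" if "X \<subseteq> {1..n}" for X
    unfolding uS_def using assms that by (intro sum.cong) auto
  have s1: "gen {1..n} E h X \<subseteq> {1..n}" for X using gen_sub .
  have s2: "gen ({1..n} - Y) E h X \<subseteq> {1..n}" for X Y using gen_sub by blast
  show ?thesis unfolding fP_def e[OF s1] e[OF s2] ..
qed



definition cc :: "nat set \<Rightarrow> nat \<Rightarrow> rat" where
  "cc T i = (if i \<in> T then 1 else 0) - (if 0 \<in> T then 1 else 0)"

lemma uS_pow:
  assumes "T \<subseteq> {0..n}"
  shows "uS (ext n (\<lambda>i. s ^ i)) T = (\<Sum>i=1..n. cc T i * s ^ i)"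
proof -
  have "uS (ext n (\<lambda>i. s ^ i)) T = (\<Sum>k\<in>{0..n}. if k \<in> T then ext n (\<lambda>i. s ^ i) k else 0)"
    unfolding uS_def using sum.inter_restrict[of "{0..n}" "ext n (\<lambda>i. s ^ i)" T] assms
    by (simp add: Int_absorb1)
  also have "{0..n} = insert 0 {1..n}" by auto
  also have "(\<Sum>k\<in>insert 0 {1..n}. if k \<in> T then ext n (\<lambda>i. s ^ i) k else 0) =
      (if 0 \<in> T then - (\<Sum>i=1..n. s ^ i) else 0) + (\<Sum>k=1..n. if k \<in> T then s ^ k else 0)"
    by (simp add: ext_def, intro sum.cong) (auto simp: ext_def)
  also have "\<dots> = (\<Sum>i=1..n. cc T i * s ^ i)"
    by (simp add: cc_def left_diff_distrib sum_subtractf) (rule sum.cong; simp)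
  finally show ?thesis .
qed

lemma uS_one:
  assumes "T \<subseteq> {0..n}"
  shows "uS (ext n (\<lambda>i. 1)) T = (\<Sum>i=1..n. cc T i)"
  using uS_pow[OF assms, of 1] by simp

lemma beta_ne:
  assumes "prp n T"
  shows "(\<Sum>i=1..n. cc T i) \<noteq> 0"
proof (cases "0 \<in> T")
  case False
  obtain i where i: "i \<in> T" using assms unfolding prp_def by blast
  then have "i \<in> {1..n}" using assms False unfolding prp_def by (cases i) auto
  then have "0 < (\<Sum>i=1..n. cc T i)"
    by (intro sum_pos2[where i=i]) (use i False in \<open>auto simp: cc_def\<close>)
  then show ?thesis by simp
next
  case True
  obtain j where j: "j \<in> {0..n}" "j \<notin> T" using assms unfolding prp_def by blast
  then have "j \<in> {1..n}" using True by (cases j) auto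
  then have "0 < (\<Sum>i=1..n. - cc T i)"
    by (intro sum_pos2[where i=j]) (use j True in \<open>auto simp: cc_def\<close>)
  then show ?thesis by (simp add: sum_negf)
qed

lemma coeff_ne:
  assumes p1: "prp n T1" and p2: "prp n T2" and ne: "T1 \<noteq> T2" and nc: "T1 \<noteq> {0..n} - T2"
  shows "\<exists>i\<in>{1..n}. cc T1 i * (\<Sum>i=1..n. cc T2 i) - cc T2 i * (\<Sum>i=1..n. cc T1 i) \<noteq> 0"
proof (rule ccontr)
  define b1 where "b1 = (\<Sum>i=1..n. cc T1 i)"
  define b2 where "b2 = (\<Sum>i=1..n. cc T2 i)"
  have b1: "b1 \<noteq> 0" and b2: "b2 \<noteq> 0" using beta_ne p1 p2 unfolding b1_def b2_def by auto
  assume "\<not> ?thesis"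
  then have H: "cc T1 j * b2 = cc T2 j * b1" if "j \<in> {1..n}" for j
    using that unfolding b1_def b2_def by auto
  obtain i where i: "i \<in> {1..n}" "cc T1 i \<noteq> 0"
  proof (rule ccontr)
    assume "\<not> thesis"
    then have "\<forall>i\<in>{1..n}. cc T1 i = 0" using that by blast
    then have "b1 = 0" unfolding b1_def by simp
    then show False using b1 by simp
  qed
  have c2: "cc T2 i \<noteq> 0" using H[OF i(1)] i(2) b2 by auto
  have s1: "T1 \<subseteq> {0..n}" "T2 \<subseteq> {0..n}" using p1 p2 unfolding prp_def by auto
  show False
  proof (cases "(0 \<in> T1) = (0 \<in> T2)")
    case True
    then have "cc T1 i = cc T2 i" using i(2) c2 by (auto simp: cc_def split: if_splits)
    then have "b1 = b2" using H[OF i(1)] i(2) by simp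
    then have cj: "cc T1 j = cc T2 j" if "j \<in> {1..n}" for j using H[OF that] b1 by simp
    have "j \<in> T1 \<longleftrightarrow> j \<in> T2" if "j \<in> {1..n}" for j
      using cj[OF that] True by (cases "j \<in> T1"; cases "j \<in> T2"; cases "0 \<in> T1") (auto simp: cc_def)
    then have "T1 = T2" using True s1 by (auto; metis atLeastAtMost_iff le_0_eq not_gr_zero subsetD One_nat_def Suc_leI)
    then show False using ne by simp
  next
    case False
    then have "cc T1 i = - cc T2 i" using i(2) c2 by (auto simp: cc_def split: if_splits)
    then have "(b2 + b1) * cc T2 i = 0" using H[OF i(1)] by (simp add: algebra_simps)
    then have "b2 = - b1" using c2 by (simp add: add_eq_0_iff)
    then have cj: "cc T1 j = - cc T2 j" if "j \<in> {1..n}" for j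
    proof -
      have "b1 * (cc T1 j + cc T2 j) = 0" using H[OF that] \<open>b2 = - b1\<close> by (simp add: algebra_simps)
      then show ?thesis using b1 by (simp add: add_eq_0_iff)
    qed
    have "j \<in> T1 \<longleftrightarrow> j \<notin> T2" if "j \<in> {1..n}" for j
      using cj[OF that] False by (cases "j \<in> T1"; cases "j \<in> T2"; cases "0 \<in> T1") (auto simp: cc_def)
    then have "T1 = {0..n} - T2" using False s1 by (auto; metis atLeastAtMost_iff le_0_eq not_gr_zero subsetD One_nat_def Suc_leI)
    then show False using nc by simp
  qed
qed



lemma exists_good: "\<exists>a b. good n a b"
proof -
  define \<beta> where "\<beta> T = (\<Sum>i=1..n. cc T i)" for T
  define Q where "Q T1 T2 = (\<Sum>i=1..n. monom (cc T1 i * \<beta> T2 - cc T2 i * \<beta> T1) i)" for T1 T2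
  define Pairs where "Pairs = {(T1,T2). prp n T1 \<and> prp n T2 \<and> T1 \<noteq> T2 \<and> T1 \<noteq> {0..n} - T2}"
  have finP: "finite Pairs"
    by (rule finite_subset[of _ "Pow {0..n} \<times> Pow {0..n}"]) (auto simp: Pairs_def prp_def)
  have Qnz: "Q T1 T2 \<noteq> 0" if "(T1, T2) \<in> Pairs" for T1 T2
  proof -
    have H: "prp n T1" "prp n T2" "T1 \<noteq> T2" "T1 \<noteq> {0..n} - T2" using that unfolding Pairs_def by auto
    obtain i where i: "i \<in> {1..n}" "cc T1 i * \<beta> T2 - cc T2 i * \<beta> T1 \<noteq> 0"
      using coeff_ne[OF H] unfolding \<beta>_def by blast
    have "coeff (Q T1 T2) i = cc T1 i * \<beta> T2 - cc T2 i * \<beta> T1"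
      unfolding Q_def coeff_sum coeff_monom using i(1) by (simp add: sum.delta)
    then show ?thesis using i(2) by auto
  qed
  have Qpoly: "poly (Q T1 T2) s = uS (ext n (\<lambda>i. s ^ i)) T1 * \<beta> T2 - uS (ext n (\<lambda>i. s ^ i)) T2 * \<beta> T1"
    if "T1 \<subseteq> {0..n}" "T2 \<subseteq> {0..n}" for T1 T2 s
    unfolding Q_def poly_sum poly_monom uS_pow[OF that(1)] uS_pow[OF that(2)]
    by (simp add: sum_distrib_left sum_distrib_right sum_subtractf algebra_simps)
  define Bad where "Bad = (\<Union>p\<in>Pairs. {s. poly (Q (fst p) (snd p)) s = 0})"
  have "finite Bad" unfolding Bad_def
    using finP by (intro finite_UN_I) (auto intro!: poly_roots_finite Qnz)
  then obtain s where s: "s \<notin> Bad" using ex_new_if_finite[OF infinite_UNIV_char_0] by blast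
  have "good n (\<lambda>i. s ^ i) (\<lambda>i. 1)"
    unfolding good_def
  proof (intro conjI allI impI)
    fix T assume "prp n T"
    then show "uS (ext n (\<lambda>i. 1)) T \<noteq> 0" using uS_one beta_ne unfolding prp_def by metis
  next
    fix T1 T2 assume H: "prp n T1 \<and> prp n T2 \<and> T1 \<noteq> T2 \<and> T1 \<noteq> {0..n} - T2"
    then have "(T1, T2) \<in> Pairs" unfolding Pairs_def by auto
    then have "poly (Q T1 T2) s \<noteq> 0" using s unfolding Bad_def by auto
    moreover have "T1 \<subseteq> {0..n}" "T2 \<subseteq> {0..n}" using H unfolding prp_def by auto
    ultimately show "uS (ext n (\<lambda>i. s ^ i)) T1 * uS (ext n (\<lambda>i. 1)) T2 -
        uS (ext n (\<lambda>i. s ^ i)) T2 * uS (ext n (\<lambda>i. 1)) T1 \<noteq> 0"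
      using Qpoly uS_one unfolding \<beta>_def by metis
  qed
  then show ?thesis by blast
qed

theorem mainTheorem17:
  fixes n :: nat and \<sigma> :: "nat \<Rightarrow> nat" and \<epsilon> \<epsilon>' :: rat
    and E E' :: "nat set set" and h h' :: "nat \<Rightarrow> nat"
  assumes "\<sigma> permutes {0..n}"
    and "\<epsilon> \<in> {1, -1}" and "\<epsilon>' \<in> {1, -1}"
    and "shrub n E h" and "shrub n E' h'"
    and "\<forall>u. generic n u \<longrightarrow>
           \<epsilon>' * fP n E' h' u = \<epsilon> * fP n E h (\<lambda>i. ext n u (\<sigma> i))"
  shows "card (Ram n E h) = card (Ram n E' h')"
proof -
  obtain a b where G: "good n a b" using exists_good by blast
  obtain N1 D1 where K1: "N1 \<noteq> 0" "degree N1 = card (Ram n E' h')" "coprime N1 D1"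
    "\<And>t. generic n (\<lambda>i. a i + t * b i) \<Longrightarrow> poly D1 t \<noteq> 0 \<and>
        fP n E' h' (\<lambda>i. ext n (\<lambda>i. a i + t * b i) (id i)) = poly N1 t / poly D1 t"
    using key[OF assms(5) permutes_id G] by blast
  obtain N2 D2 where K2: "N2 \<noteq> 0" "degree N2 = card (Ram n E h)" "coprime N2 D2"
    "\<And>t. generic n (\<lambda>i. a i + t * b i) \<Longrightarrow> poly D2 t \<noteq> 0 \<and>
        fP n E h (\<lambda>i. ext n (\<lambda>i. a i + t * b i) (\<sigma> i)) = poly N2 t / poly D2 t"
    using key[OF assms(4) assms(1) G] by blast
  have e0: "\<epsilon> \<noteq> 0" "\<epsilon>' \<noteq> 0" using assms(2,3) by auto
  define R where "R = smult \<epsilon>' N1 * D2 - smult \<epsilon> N2 * D1"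
  have Rz: "poly R t = 0" if "t \<notin> {t. \<not> generic n (\<lambda>i. a i + t * b i)}" for t
  proof -
    have gt: "generic n (\<lambda>i. a i + t * b i)" using that by simp
    have c: "fP n E' h' (\<lambda>i. a i + t * b i) = fP n E' h' (\<lambda>i. ext n (\<lambda>i. a i + t * b i) (id i))"
      by (rule fP_cong) (auto simp: ext_def)
    have "\<epsilon>' * (poly N1 t / poly D1 t) = \<epsilon> * (poly N2 t / poly D2 t)"
      using assms(6) gt c K1(4)[OF gt] K2(4)[OF gt] by metis
    then show ?thesis unfolding R_def using K1(4)[OF gt] K2(4)[OF gt] by (simp add: field_simps)
  qed
  have "R = 0"
  proof (rule ccontr)
    assume "R \<noteq> 0"
    then have "finite {t. poly R t = 0}" by (rule poly_roots_finite)
    moreover have "UNIV - {t. \<not> generic n (\<lambda>i. a i + t * b i)} \<subseteq> {t. poly R t = 0}" using Rz by auto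
    moreover have "infinite (UNIV - {t. \<not> generic n (\<lambda>i. a i + t * b i)})"
      by (rule Diff_infinite_finite[OF finite_bad[OF G] infinite_UNIV_char_0])
    ultimately show False using finite_subset by blast
  qed
  then have eq: "smult \<epsilon>' N1 * D2 = smult \<epsilon> N2 * D1" unfolding R_def by simp
  have "N1 dvd smult \<epsilon> N2 * D1" unfolding eq[symmetric] by (intro dvd_mult2 dvd_smult dvd_refl)
  then have "N1 dvd smult \<epsilon> N2" using coprime_dvd_mult_left_iff[OF K1(3)] by blast
  then have d1: "N1 dvd N2" using dvd_smult_iff[OF e0(1)] by blast
  have "N2 dvd smult \<epsilon>' N1 * D2" unfolding eq by (intro dvd_mult2 dvd_smult dvd_refl)
  then have "N2 dvd smult \<epsilon>' N1" using coprime_dvd_mult_left_iff[OF K2(3)] by blast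
  then have d2: "N2 dvd N1" using dvd_smult_iff[OF e0(2)] by blast
  have "degree N1 \<le> degree N2" "degree N2 \<le> degree N1"
    using dvd_imp_degree_le d1 d2 K1(1) K2(1) by auto
  then show ?thesis using K1(2) K2(2) by simp
qed


end
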